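(* Let $I=(a..c)$ be a conserved interval of $\mathcal{P}$ and let $F$ be a set of frontiers of $I$. Then, in each $P_k$, the elements of $F$ are either all positive or all negative.
   Context: Let $n\geq 2$ and let $\mathcal{P}=\{P_1,\ldots,P_K\}$ be signed permutations of $\{1,\ldots,n\}$: each $P_k$ is an ordering of $1,\ldots,n$ in which each element carries a sign $+$ (positive) or $-$ (negative). Assume $P_1=(+1,+2,\ldots,+n)$ and that every $P_k$ has first element $+1$ and last element $+n$. For integers $i\leq j$ write $(i..j)=\{i,\ldots,j\}$. A conserved interval of $\mathcal{P}$ is either a singleton, or a set $(a..c)$ with $a<c$ which (ignoring signs) occupies consecutive positions in every $P_k$ and which, in every $P_k$, has either $+a$ at its left end and $+c$ at its right end, or $-c$ at its left end and $-a$ at its right end. For a conserved interval $I=(a..c)$, a set $\{f_1,\ldots,f_k\}$ with $a=f_1<f_2<\cdots<f_k=c$ is a set of frontiers of $I$ if $(f_i..f_j)$ is a conserved interval for all $1\leq i<j\leq k$. *)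

theory Defs
  imports Main
begin

(* A signed permutation of {1..n} is an int list: entry x stands for element |x|
   with sign + if x > 0 and - if x < 0. *)
definition signed_perm :: "nat \<Rightarrow> int list \<Rightarrow> bool" where
  "signed_perm n xs \<longleftrightarrow> length xs = n \<and> distinct (map abs xs) \<and> set (map abs xs) = {1..int n}"

definition conserved_in :: "int list \<Rightarrow> int \<Rightarrow> int \<Rightarrow> bool" where
  "conserved_in xs a c \<longleftrightarrow> a < c \<and>
     (\<exists>i j. i < j \<and> j < length xs \<and>
        set (map abs (take (j - i + 1) (drop i xs))) = {a..c} \<and>
        ((xs ! i = a \<and> xs ! j = c) \<or> (xs ! i = - c \<and> xs ! j = - a)))"

definition conserved :: "nat \<Rightarrow> int list list \<Rightarrow> int \<Rightarrow> int \<Rightarrow> bool" where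
  "conserved n Ps a c \<longleftrightarrow>
     (a = c \<and> a \<in> {1..int n}) \<or> (a < c \<and> (\<forall>xs\<in>set Ps. conserved_in xs a c))"

definition frontiers :: "nat \<Rightarrow> int list list \<Rightarrow> int \<Rightarrow> int \<Rightarrow> int set \<Rightarrow> bool" where
  "frontiers n Ps a c F \<longleftrightarrow> F \<subseteq> {a..c} \<and> a \<in> F \<and> c \<in> F \<and>
     (\<forall>f\<in>F. \<forall>g\<in>F. f < g \<longrightarrow> conserved n Ps f g)"

end

theory Submission
  imports Defs
begin

lemma sp_neg:
  assumes "signed_perm n xs" "x \<in> set xs" "- x \<in> set xs"
  shows False
proof -
  have inj: "inj_on abs (set xs)" using assms(1) by (simp add: signed_perm_def distinct_map)
  have "x = - x" using inj_onD[OF inj _ assms(2,3)] by simp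
  hence "x = 0" by simp
  hence "abs x \<in> set (map abs xs)" using assms(2) by auto
  thus False using assms(1) \<open>x = 0\<close> by (simp add: signed_perm_def)
qed

lemma ci_mem:
  assumes "conserved_in xs a c"
  shows "(a \<in> set xs \<and> c \<in> set xs) \<or> (- c \<in> set xs \<and> - a \<in> set xs)"
  using assms unfolding conserved_in_def
  by (metis less_trans nth_mem)

theorem lemma6:
  fixes n :: nat and Ps :: "int list list" and a c :: int and F :: "int set"
  assumes "n \<ge> 2"
    and "Ps \<noteq> []"
    and "hd Ps = [1..int n]"
    and "\<forall>xs\<in>set Ps. signed_perm n xs \<and> hd xs = 1 \<and> last xs = int n"
    and "conserved n Ps a c"
    and "frontiers n Ps a c F"
  shows "\<forall>xs\<in>set Ps. (\<forall>f\<in>F. f \<in> set xs) \<or> (\<forall>f\<in>F. - f \<in> set xs)"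
proof
  fix xs assume xs: "xs \<in> set Ps"
  have sp: "signed_perm n xs" using assms(4) xs by auto
  have FS: "F \<subseteq> {a..c}" "a \<in> F" "c \<in> F" and FC: "\<And>f g. f \<in> F \<Longrightarrow> g \<in> F \<Longrightarrow> f < g \<Longrightarrow> conserved n Ps f g"
    using assms(6) unfolding frontiers_def by auto
  have CI: "conserved_in xs f g" if "f \<in> F" "g \<in> F" "f < g" for f g
    using FC[OF that] xs that(3) unfolding conserved_def by auto
  show "(\<forall>f\<in>F. f \<in> set xs) \<or> (\<forall>f\<in>F. - f \<in> set xs)"
  proof (cases "a = c")
    case True
    hence F1: "F = {a}" using FS by auto
    have "a \<in> {1..int n}" using assms(5) True unfolding conserved_def by auto
    hence "a \<in> set (map abs xs)" using sp by (simp add: signed_perm_def)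
    then obtain y where "y \<in> set xs" "abs y = a" by auto
    hence "a \<in> set xs \<or> - a \<in> set xs" by (cases "y \<ge> 0") auto
    thus ?thesis using F1 by auto
  next
    case False
    hence ac: "a < c" using FS by auto
    from ci_mem[OF CI[OF FS(2,3) ac]] show ?thesis
    proof
      assume pos: "a \<in> set xs \<and> c \<in> set xs"
      { fix f assume f: "f \<in> F"
        have "f \<in> set xs"
        proof (cases "f = c")
          case True thus ?thesis using pos by simp
        next
          case False
          hence "f < c" using f FS by auto
          from ci_mem[OF CI[OF f FS(3) this]] show ?thesis
            using sp_neg[OF sp] pos by blast
        qed }
      thus ?thesis by blast
    next
      assume neg: "- c \<in> set xs \<and> - a \<in> set xs"
      { fix f assume f: "f \<in> F"
        have "- f \<in> set xs"
        proof (cases "f = a")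
          case True thus ?thesis using neg by simp
        next
          case False
          hence "a < f" using f FS by auto
          from ci_mem[OF CI[OF FS(2) f this]] show ?thesis
            using sp_neg[OF sp, of a] neg by auto
        qed }
      thus ?thesis by blast
    qed
  qed
qed

end
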